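(* Let $p\ge 3$ be a prime and let $(a_n)_{n\ge0}$ be a sequence of elements of $\mathbf{Q}_p$ satisfying $a_n=ra_{n-1}+sa_{n-2}$ ($n\ge2$) for some $r,s\in\mathbf{Q}_p$, given by $a_n=c_1\lambda_1^n+c_2\lambda_2^n$ for nonzero $c_1,c_2,\lambda_1,\lambda_2$ which all lie in $\mathbf{Q}_p$ or all lie in some unramified quadratic extension $\mathbf{Q}_p(\sqrt d)$ of $\mathbf{Q}_p$. Suppose $|\lambda_1|_p=|\lambda_2|_p>0$ and $\lambda_2/\lambda_1$ is not a root of unity. Let $l$ be the order of $\lambda_2/\lambda_1$ modulo $p$ and $k=\nu_p\big((\lambda_2/\lambda_1)^l-1\big)$. Let $K$ be the Kepler set of $(a_n)$ and let $\Lambda$ be the closure of $\{(\lambda_2/\lambda_1)^n: n\in\mathbf{N}\}$. <ol> <li>If $-c_1/c_2\notin\Lambda$, then $$K=\bigsqcup_{i=0}^{l-1}\left(\frac{a_{i+1}}{a_i}+p^{\nu_p(c_1/c_2)+\nu_p(\lambda_2-\lambda_1)-2\nu_p\left(c_1/c_2+(\lambda_2/\lambda_1)^i\right)+k}\mathbf{Z}_p\right).$$</li> <li>If $-c_1/c_2\in\Lambda$ and $l=1$, then $K=\mathbf{Q}_p\setminus\left(\frac{\lambda_1+\lambda_2}{2}+p^{1+\nu_p(\lambda_2)}\mathbf{Z}_p\right)$.</li> <li>If $-c_1/c_2\in\Lambda$, $l\ge2$, and $s\in\{0,1,\dots,l-1\}$ is defined by $(\lambda_2/\lambda_1)^s\equiv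 -c_1/c_2 \pmod{p^k}$, then $$K=\bigsqcup_{i=0,\,i\ne s}^{l-1}\left(\frac{a_{i+1}}{a_i}+p^{\nu_p(\lambda_2-\lambda_1)+k}\mathbf{Z}_p\right)\ \bigsqcup\ \left(\mathbf{Q}_p\setminus p^{\nu_p(\lambda_2)+1-k}\mathbf{Z}_p\right).$$</li> </ol>
   Context: The Kepler set of a sequence $(a_n)_{n\ge0}$ in $\mathbf{Q}_p$ is the closure in $\mathbf{Q}_p$ of $\{a_{n+1}/a_n : n\ge0,\ a_n\ne0\}$. $\nu_p$ denotes the $p$-adic valuation on $\mathbf{Q}_p$ and its unique extension to $\mathbf{Q}_p(\sqrt d)$ with $\nu_p(p)=1$; $|x|_p=p^{-\nu_p(x)}$. The unramified quadratic extension is $\mathbf{Q}_p(\sqrt d)$ with $d\in\mathbf{Z}_p^*$ a non-square; its ring of integers is $\mathbf{Z}_p[\sqrt d]$. For $x,y$ in the ring of integers and $m\ge1$, $x\equiv y\pmod{p^m}$ means $x-y\in p^m$ times the ring of integers. For a unit $u$ of the ring of integers, the order of $u$ modulo $p$ is the least $l\ge1$ with $u^l\equiv1\pmod p$. The closure $\Lambda$ is taken in the field containing $\lambda_1,\lambda_2$; $\bigsqcup$ denotes disjoint union. *)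

theory Defs
  imports "HOL-Computational_Algebra.Computational_Algebra"
begin

text \<open>
  We work in an arbitrary field E
  (a type 'a of characteristic 0) equipped with an integer valuation v, and impose
  conditions that characterise E up to isomorphism as either Q_p or an unramified
  quadratic extension Q_p(sqrt d), with v = nu_p.  The value v 0 is irrelevant; all
  uses of v are guarded by nonzeroness via close.
\<close>

definition close :: "('a::field \<Rightarrow> int) \<Rightarrow> int \<Rightarrow> 'a \<Rightarrow> bool" where
  "close v m x \<longleftrightarrow> x = 0 \<or> m \<le> v x"

definition vclosure :: "('a::field \<Rightarrow> int) \<Rightarrow> 'a set \<Rightarrow> 'a set" where
  "vclosure v S = {x. \<forall>m::int. \<exists>y\<in>S. close v m (x - y)}"

definition v_cauchy :: "('a::field \<Rightarrow> int) \<Rightarrow> (nat \<Rightarrow> 'a) \<Rightarrow> bool" where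
  "v_cauchy v X \<longleftrightarrow> (\<forall>m::int. \<exists>N. \<forall>i\<ge>N. \<forall>j\<ge>N. close v m (X i - X j))"

definition v_converges :: "('a::field \<Rightarrow> int) \<Rightarrow> (nat \<Rightarrow> 'a) \<Rightarrow> 'a \<Rightarrow> bool" where
  "v_converges v X L \<longleftrightarrow> (\<forall>m::int. \<exists>N. \<forall>n\<ge>N. close v m (X n - L))"

definition Qp :: "('a::field_char_0 \<Rightarrow> int) \<Rightarrow> 'a set" where
  "Qp v = vclosure v (range of_rat)"

definition padic_valuation :: "nat \<Rightarrow> ('a::field_char_0 \<Rightarrow> int) \<Rightarrow> bool" where
  "padic_valuation p v \<longleftrightarrow>
     (\<forall>x y. x \<noteq> 0 \<longrightarrow> y \<noteq> 0 \<longrightarrow> v (x * y) = v x + v y) \<and>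
     (\<forall>x y. x \<noteq> 0 \<longrightarrow> y \<noteq> 0 \<longrightarrow> x + y \<noteq> 0 \<longrightarrow> min (v x) (v y) \<le> v (x + y)) \<and>
     (\<forall>n::int. n \<noteq> 0 \<longrightarrow> v (of_int n) = int (multiplicity (int p) n)) \<and>
     (\<forall>X. v_cauchy v X \<longrightarrow> (\<exists>L. v_converges v X L))"

text \<open>E is Q_p itself, or E = Q_p(delta) with delta^2 = d a p-adic unit which is not a
  square in Q_p (the unramified quadratic extension, p odd)\<close>
definition Qp_or_unramified_quadratic :: "nat \<Rightarrow> ('a::field_char_0 \<Rightarrow> int) \<Rightarrow> bool" where
  "Qp_or_unramified_quadratic p v \<longleftrightarrow>
     padic_valuation p v \<and>
     (Qp v = UNIV \<or>
      (\<exists>\<delta>. \<delta>\<^sup>2 \<in> Qp v \<and> \<delta>\<^sup>2 \<noteq> 0 \<and> v (\<delta>\<^sup>2) = 0 \<and> (\<forall>x\<in>Qp v. x\<^sup>2 \<noteq> \<delta>\<^sup>2) \<and>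
           (\<forall>z. \<exists>a\<in>Qp v. \<exists>b\<in>Qp v. z = a + b * \<delta>)))"

definition pZp :: "('a::field_char_0 \<Rightarrow> int) \<Rightarrow> int \<Rightarrow> 'a set" where
  "pZp v m = {y \<in> Qp v. close v m y}"

definition coset :: "('a::field_char_0 \<Rightarrow> int) \<Rightarrow> 'a \<Rightarrow> int \<Rightarrow> 'a set" where
  "coset v c m = (\<lambda>y. c + y) ` pZp v m"

definition kepler_set :: "('a::field_char_0 \<Rightarrow> int) \<Rightarrow> (nat \<Rightarrow> 'a) \<Rightarrow> 'a set" where
  "kepler_set v a = Qp v \<inter> vclosure v {a (Suc n) / a n | n. a n \<noteq> 0}"

definition cong_pm :: "('a::field_char_0 \<Rightarrow> int) \<Rightarrow> int \<Rightarrow> 'a \<Rightarrow> 'a \<Rightarrow> bool" where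
  "cong_pm v m x y \<longleftrightarrow> close v m (x - y)"

definition ord_mod_p :: "('a::field_char_0 \<Rightarrow> int) \<Rightarrow> 'a \<Rightarrow> nat" where
  "ord_mod_p v u = (LEAST l. 1 \<le> l \<and> cong_pm v 1 (u ^ l) 1)"

end

theory Submission
  imports Defs
begin


locale padic =
  fixes p :: nat and v :: "'a::field_char_0 \<Rightarrow> int"
  assumes pv: "padic_valuation p v" and pp: "prime p" and p3: "p \<ge> 3"
begin

abbreviation cl :: "int \<Rightarrow> 'a \<Rightarrow> bool" where "cl m x \<equiv> close v m x"

lemma vmult: "x \<noteq> 0 \<Longrightarrow> y \<noteq> 0 \<Longrightarrow> v (x * y) = v x + v y"
  using pv unfolding padic_valuation_def by blast
lemma vadd: "x \<noteq> 0 \<Longrightarrow> y \<noteq> 0 \<Longrightarrow> x + y \<noteq> 0 \<Longrightarrow> min (v x) (v y) \<le> v (x + y)"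
  using pv unfolding padic_valuation_def by blast
lemma vint: "n \<noteq> 0 \<Longrightarrow> v (of_int n) = int (multiplicity (int p) n)"
  using pv unfolding padic_valuation_def by blast

lemma v1[simp]: "v 1 = 0"
  using vmult[of 1 1] by simp
lemma vm1: "v (-1) = 0"
  using vmult[of "-1" "-1"] by simp
lemma vneg[simp]: "v (- x) = v x"
proof (cases "x = 0")
  case False then show ?thesis using vmult[of "-1" x] vm1 by simp
qed simp
lemma vinv: "x \<noteq> 0 \<Longrightarrow> v (inverse x) = - v x"
  using vmult[of x "inverse x"] by simp
lemma vdiv: "x \<noteq> 0 \<Longrightarrow> y \<noteq> 0 \<Longrightarrow> v (x / y) = v x - v y"
  by (simp add: divide_inverse vmult vinv)
lemma vpow: "x \<noteq> 0 \<Longrightarrow> v (x ^ n) = int n * v x"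
  by (induction n) (auto simp: vmult algebra_simps)

lemma vp: "v (of_nat p) = 1"
proof -
  have "v (of_int (int p)) = int (multiplicity (int p) (int p))"
    using pp by (intro vint) (auto simp: prime_gt_0_nat)
  moreover have "multiplicity (int p) (int p) = 1"
    using pp by (intro multiplicity_self) (auto simp: prime_int_iff prime_nat_iff)
  ultimately show ?thesis by simp
qed

lemma vnat: "n \<noteq> 0 \<Longrightarrow> v (of_nat n) \<ge> 0"
  using vint[of "int n"] by simp
lemma vint_ge: "n \<noteq> 0 \<Longrightarrow> v (of_int n) \<ge> 0"
  using vint[of n] by simp
lemma vint_dvd: "n \<noteq> 0 \<Longrightarrow> int p dvd n \<Longrightarrow> v (of_int n) \<ge> 1"
proof -
  assume a: "n \<noteq> 0" "int p dvd n"
  have "multiplicity (int p) n \<ge> 1"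
    using a pp by (intro multiplicity_geI) (auto simp: prime_gt_1_nat)
  then show ?thesis using vint[OF a(1)] by simp
qed
lemma vint_ndvd: "\<not> int p dvd n \<Longrightarrow> v (of_int n) = 0"
proof -
  assume a: "\<not> int p dvd n"
  then have "n \<noteq> 0" by auto
  then show ?thesis using vint[of n] not_dvd_imp_multiplicity_0[OF a] by simp
qed
lemma v2: "v 2 = 0"
proof -
  have "\<not> int p dvd 2"
  proof
    assume "int p dvd 2"
    then have "p dvd 2" by presburger
    then have "p \<le> 2" by (auto dest: dvd_imp_le)
    with p3 show False by simp
  qed
  from vint_ndvd[OF this] show ?thesis by simp
qed

lemma cl0[simp]: "cl m 0" by (simp add: close_def)
lemma cl_self: "cl (v x) x" by (simp add: close_def)
lemma cl_iff: "x \<noteq> 0 \<Longrightarrow> cl m x \<longleftrightarrow> m \<le> v x" by (simp add: close_def)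
lemma cl_mono: "cl m x \<Longrightarrow> m' \<le> m \<Longrightarrow> cl m' x" by (auto simp: close_def)
lemma cl_neg: "cl m (- x) \<longleftrightarrow> cl m x" by (auto simp: close_def)
lemma cl_add: "cl m x \<Longrightarrow> cl m y \<Longrightarrow> cl m (x + y)"
  unfolding close_def using vadd[of x y] by fastforce
lemma cl_diff: "cl m x \<Longrightarrow> cl m y \<Longrightarrow> cl m (x - y)"
  using cl_add[of m x "- y"] cl_neg[of m y] by simp
lemma cl_mult: "cl a x \<Longrightarrow> cl b y \<Longrightarrow> cl (a + b) (x * y)"
  unfolding close_def using vmult[of x y] by (cases "x = 0 \<or> y = 0") auto
lemma cl_mult': "cl a x \<Longrightarrow> cl b y \<Longrightarrow> c = a + b \<Longrightarrow> cl c (x * y)"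
  using cl_mult by blast
lemma cl_div: "cl a x \<Longrightarrow> y \<noteq> 0 \<Longrightarrow> cl (a - v y) (x / y)"
  unfolding close_def by (cases "x = 0") (auto simp: vdiv)
lemma cl_mult_iff: "y \<noteq> 0 \<Longrightarrow> cl a (y * x) \<longleftrightarrow> cl (a - v y) x"
  unfolding close_def by (cases "x = 0") (auto simp: vmult)
lemma cl_div_iff: "y \<noteq> 0 \<Longrightarrow> cl a (x / y) \<longleftrightarrow> cl (a + v y) x"
  unfolding close_def by (cases "x = 0") (auto simp: vdiv)
lemma cl_nat: "cl 0 (of_nat n)"
  using vnat[of n] by (cases "n = 0") (auto simp: close_def)
lemma cl_int: "cl 0 (of_int n)"
  using vint_ge[of n] by (cases "n = 0") (auto simp: close_def)
lemma cl_sum: "(\<And>i. i \<in> A \<Longrightarrow> cl m (f i)) \<Longrightarrow> cl m (sum f A)"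
  by (induction A rule: infinite_finite_induct) (auto intro: cl_add)
lemma cl_pow: "cl 0 x \<Longrightarrow> cl 0 (x ^ n)"
proof (induction n)
  case 0 show ?case by (simp add: close_def)
next
  case (Suc n) then show ?case using cl_mult[of 0 x 0 "x ^ n"] by simp
qed

lemma v_strict: "y \<noteq> 0 \<Longrightarrow> cl (v y + 1) x \<Longrightarrow> y + x \<noteq> 0 \<and> v (y + x) = v y"
proof -
  assume y: "y \<noteq> 0" and x: "cl (v y + 1) x"
  show ?thesis
  proof (cases "x = 0")
    case True then show ?thesis using y by simp
  next
    case False
    then have vx: "v x \<ge> v y + 1" using x by (simp add: close_def)
    have ne: "y + x \<noteq> 0"
    proof
      assume "y + x = 0" then have "x = - y" by (simp add: add_eq_0_iff2)
      then show False using vx by simp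
    qed
    have "v (y + x) \<ge> v y" using vadd[OF y False ne] vx by simp
    moreover have "v y \<ge> v (y + x)"
    proof -
      have "y = (y + x) + (- x)" by simp
      have "min (v (y + x)) (v (- x)) \<le> v ((y + x) + (- x))"
        by (rule vadd[OF ne]) (use False y in auto)
      then show ?thesis using vx by simp
    qed
    ultimately show ?thesis using ne by simp
  qed
qed

lemma v_strict': "y \<noteq> 0 \<Longrightarrow> cl (v y + 1) (x - y) \<Longrightarrow> x \<noteq> 0 \<and> v x = v y"
  using v_strict[of y "x - y"] by simp

lemma cl_strict_not: "y \<noteq> 0 \<Longrightarrow> cl (v y + 1) x \<Longrightarrow> \<not> cl (v y + 1) (y + x)"
  using v_strict[of y x] by (simp add: close_def)

end



context padic begin

lemma Qp_iff: "x \<in> Qp v \<longleftrightarrow> (\<forall>m. \<exists>q. cl m (x - of_rat q))"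
  unfolding Qp_def vclosure_def by auto

lemma Qp_rat: "of_rat q \<in> Qp v"
  unfolding Qp_iff by (auto intro: exI[of _ q])
lemma Qp_0[simp]: "0 \<in> Qp v" using Qp_rat[of 0] by simp
lemma Qp_1[simp]: "1 \<in> Qp v" using Qp_rat[of 1] by simp
lemma Qp_nat[simp]: "of_nat n \<in> Qp v" using Qp_rat[of "of_nat n"] by simp
lemma Qp_int[simp]: "of_int n \<in> Qp v" using Qp_rat[of "of_int n"] by simp
lemma Qp_numeral[simp]: "numeral n \<in> Qp v" using Qp_rat[of "numeral n"] by simp

lemma Qp_add: "x \<in> Qp v \<Longrightarrow> y \<in> Qp v \<Longrightarrow> x + y \<in> Qp v"
  unfolding Qp_iff
proof (intro allI)
  fix m assume x: "\<forall>m. \<exists>q. cl m (x - of_rat q)" and y: "\<forall>m. \<exists>q. cl m (y - of_rat q)"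
  obtain q1 where 1: "cl m (x - of_rat q1)" using x by blast
  obtain q2 where 2: "cl m (y - of_rat q2)" using y by blast
  have "cl m ((x - of_rat q1) + (y - of_rat q2))" by (rule cl_add[OF 1 2])
  then have "cl m (x + y - of_rat (q1 + q2))" by (simp add: of_rat_add algebra_simps)
  then show "\<exists>q. cl m (x + y - of_rat q)" by blast
qed

lemma Qp_neg: "x \<in> Qp v \<Longrightarrow> - x \<in> Qp v"
  unfolding Qp_iff
proof (intro allI)
  fix m assume x: "\<forall>m. \<exists>q. cl m (x - of_rat q)"
  obtain q1 where 1: "cl m (x - of_rat q1)" using x by blast
  then have "cl m (- x - of_rat (- q1))" using cl_neg[of m "x - of_rat q1"] by (simp add: of_rat_minus algebra_simps)
  then show "\<exists>q. cl m (- x - of_rat q)" by blast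
qed

lemma Qp_diff: "x \<in> Qp v \<Longrightarrow> y \<in> Qp v \<Longrightarrow> x - y \<in> Qp v"
  using Qp_add[of x "- y"] Qp_neg[of y] by simp

lemma Qp_mult: "x \<in> Qp v \<Longrightarrow> y \<in> Qp v \<Longrightarrow> x * y \<in> Qp v"
proof -
  assume xq: "x \<in> Qp v" and yq: "y \<in> Qp v"
  show ?thesis
  proof (cases "x = 0 \<or> y = 0")
    case True then show ?thesis by auto
  next
    case False
    then have x0: "x \<noteq> 0" and y0: "y \<noteq> 0" by auto
    show ?thesis unfolding Qp_iff
    proof
      fix m
      obtain q1 where 1: "cl (max (m - v y) (v x)) (x - of_rat q1)" using xq unfolding Qp_iff by blast
      obtain q2 where 2: "cl (m - v x) (y - of_rat q2)" using yq unfolding Qp_iff by blast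
      have q1: "cl (v x) (of_rat q1)"
        using cl_diff[OF cl_self[of x] cl_mono[OF 1, of "v x"]] by simp
      have a: "cl m ((x - of_rat q1) * y)"
        by (rule cl_mult'[OF cl_mono[OF 1, of "m - v y"] cl_self[of y]]) auto
      have b: "cl m (of_rat q1 * (y - of_rat q2))"
        by (rule cl_mult'[OF q1 2]) auto
      have "cl m ((x - of_rat q1) * y + of_rat q1 * (y - of_rat q2))" by (rule cl_add[OF a b])
      then have "cl m (x * y - of_rat (q1 * q2))" by (simp add: of_rat_mult algebra_simps)
      then show "\<exists>q. cl m (x * y - of_rat q)" by blast
    qed
  qed
qed

lemma Qp_inverse: "x \<in> Qp v \<Longrightarrow> inverse x \<in> Qp v"
proof -
  assume xq: "x \<in> Qp v"
  show ?thesis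
  proof (cases "x = 0")
    case True then show ?thesis by simp
  next
    case False
    show ?thesis unfolding Qp_iff
    proof
      fix m
      obtain q where 1: "cl (max (v x + 1) (m + 2 * v x)) (x - of_rat q)" using xq unfolding Qp_iff by blast
      have nq: "of_rat q - x = - (x - of_rat q)" by simp
      have "cl (v x + 1) (of_rat q - x)" unfolding nq cl_neg by (rule cl_mono[OF 1]) simp
      from v_strict'[OF False this] have q: "of_rat q \<noteq> (0::'a)" "v (of_rat q) = v x" by auto
      have "inverse x - of_rat (inverse q) = inverse x - inverse (of_rat q)"
        by (simp only: of_rat_inverse)
      also have "\<dots> = (of_rat q - x) / (x * of_rat q)"
        using q(1) False by (simp add: field_simps)
      finally have eqi: "inverse x - of_rat (inverse q) = (of_rat q - x) / (x * of_rat q)" .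
      have "cl m ((of_rat q - x) / (x * of_rat q))"
      proof -
        have "cl (m + 2 * v x) (of_rat q - x)" unfolding nq cl_neg by (rule cl_mono[OF 1]) simp
        from cl_div[OF this, of "x * of_rat q"] have "cl (m + 2 * v x - v (x * of_rat q)) ((of_rat q - x) / (x * of_rat q))"
          using q False by simp
        moreover have "m + 2 * v x - v (x * of_rat q) = m" using q False by (simp add: vmult)
        ultimately show ?thesis by simp
      qed
      then have "cl m (inverse x - of_rat (inverse q))" unfolding eqi .
      then show "\<exists>q. cl m (inverse x - of_rat q)" by blast
    qed
  qed
qed

lemma Qp_divide: "x \<in> Qp v \<Longrightarrow> y \<in> Qp v \<Longrightarrow> x / y \<in> Qp v"
  by (simp add: divide_inverse Qp_mult Qp_inverse)

lemma Qp_power: "x \<in> Qp v \<Longrightarrow> x ^ n \<in> Qp v"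
  by (induction n) (auto intro: Qp_mult)

end


context padic begin
lemma residue_rat: "cl 0 (of_rat q :: 'a) \<Longrightarrow> \<exists>t<p. cl 1 (of_rat q - (of_nat t :: 'a))"
proof -
  assume h: "cl 0 (of_rat q :: 'a)"
  obtain a b where qa: "quotient_of q = (a, b)" by (cases "quotient_of q") auto
  have bpos: "b > 0" using quotient_of_denom_pos[OF qa] .
  have cop: "coprime a b" using quotient_of_coprime[OF qa] .
  have qeq: "(of_rat q :: 'a) = of_int a / of_int b"
    using quotient_of_div[OF qa] by (simp add: of_rat_divide)
  have p1: "int p > 1" using pp prime_gt_1_nat by auto
  have nb: "\<not> int p dvd b"
  proof
    assume pb: "int p dvd b"
    have "\<not> int p dvd a"
    proof
      assume "int p dvd a"
      then have "is_unit (int p)" using coprime_common_divisor[OF cop _ pb] by blast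
      then show False using p1 by simp
    qed
    then have va: "v (of_int a :: 'a) = 0" by (rule vint_ndvd)
    have vb: "v (of_int b :: 'a) \<ge> 1" using vint_dvd[OF _ pb] bpos by simp
    have a0: "a \<noteq> 0" using \<open>\<not> int p dvd a\<close> by auto
    have "v (of_rat q :: 'a) = v (of_int a :: 'a) - v (of_int b :: 'a)"
      using qeq a0 bpos by (simp add: vdiv)
    moreover have "(of_rat q :: 'a) \<noteq> 0" using qeq a0 bpos by simp
    ultimately show False using h va vb by (simp add: close_def)
  qed
  have "prime (int p)" using pp by simp
  then have "coprime (int p) b" using nb by (rule prime_imp_coprime)
  then have cbp: "coprime b (int p)" by (rule coprime_commute[THEN iffD1])
  then obtain c d where cd: "c * b + d * int p = 1"
  proof -
    obtain c d where "c * b + d * int p = gcd b (int p)" using bezout_int[of b "int p"] by blast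
    moreover have "gcd b (int p) = 1" using cbp by simp
    ultimately show ?thesis using that by simp
  qed
  define t where "t = (a * c) mod int p"
  have t0: "t \<ge> 0" "t < int p" using p1 by (auto simp: t_def)
  have dv: "int p dvd (a - t * b)"
  proof -
    have e1: "a * c - t = int p * (a * c div int p)"
      unfolding t_def by (rule minus_mod_eq_mult_div)
    have "a - t * b = a * (c * b + d * int p) - t * b" using cd by simp
    also have "\<dots> = (a * c - t) * b + int p * (a * d)" by (simp add: algebra_simps)
    also have "\<dots> = int p * ((a * c div int p) * b + a * d)" unfolding e1 by (simp add: algebra_simps)
    finally show ?thesis by (rule dvdI)
  qed
  have "cl 1 ((of_int (a - t * b) :: 'a) / of_int b)"
  proof (cases "a - t * b = 0")
    case True then show ?thesis by simp
  next
    case False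
    have "v (of_int b :: 'a) = 0" using vint_ndvd[OF nb] .
    moreover have "v (of_int (a - t * b) :: 'a) \<ge> 1" using vint_dvd[OF False dv] .
    ultimately show ?thesis using cl_div[of 1 "of_int (a - t * b) :: 'a" "of_int b"] bpos False
      by (simp add: close_def)
  qed
  moreover have "(of_int (a - t * b) :: 'a) / of_int b = of_rat q - of_int t"
    using qeq bpos by (simp add: field_simps)
  moreover have "(of_int t :: 'a) = of_nat (nat t)" using t0 by simp
  ultimately have "cl 1 (of_rat q - (of_nat (nat t) :: 'a))" by simp
  moreover have "nat t < p" using t0 by simp
  ultimately show ?thesis by blast
qed

lemma residue: "r \<in> Qp v \<Longrightarrow> cl 0 r \<Longrightarrow> \<exists>t<p. cl 1 (r - of_nat t)"
proof -
  assume rq: "r \<in> Qp v" and r0: "cl 0 r"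
  obtain q where q: "cl 1 (r - of_rat q)" using rq unfolding Qp_iff by blast
  have "cl 0 (of_rat q :: 'a)" using cl_diff[OF r0 cl_mono[OF q, of 0]] by simp
  then obtain t where t: "t < p" "cl 1 (of_rat q - (of_nat t :: 'a))" using residue_rat by blast
  have "cl 1 ((r - of_rat q) + (of_rat q - of_nat t))" by (rule cl_add[OF q t(2)])
  then show ?thesis using t(1) by auto
qed

end



lemma double_sum_less: "2 * (\<Sum>i<(n::nat). i) + n = n * n"
  by (induction n) (auto simp: algebra_simps)

context padic begin

lemma p_odd: "odd p"
  using pp p3 prime_odd_nat by auto

lemma sum_less_p: "(\<Sum>i<p. i) = p * ((p - 1) div 2)"
proof -
  obtain h where h: "p = 2 * h + 1" using p_odd by (auto elim!: oddE)
  have "2 * (\<Sum>i<p. i) + p = p * p" by (rule double_sum_less)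
  then have "2 * (\<Sum>i<p. i) = 2 * (p * h)" unfolding h by (simp add: algebra_simps)
  then have "(\<Sum>i<p. i) = p * h" by simp
  moreover have "(p - 1) div 2 = h" using h by simp
  ultimately show ?thesis by simp
qed

lemma unit_of_cl1: "cl 1 (w - 1) \<Longrightarrow> w \<noteq> 0 \<and> v w = 0"
  using v_strict[of 1 "w - 1"] by simp

lemma cl0_of_cl1: "cl 1 (w - 1) \<Longrightarrow> cl 0 w"
  using unit_of_cl1[of w] by (auto simp: close_def)

lemma pow_cl: assumes "cl \<kappa> (W - 1)" "\<kappa> \<ge> 0" shows "cl \<kappa> (W ^ i - 1)"
proof -
  have W0: "cl 0 W"
  proof -
    have "cl 0 (1 + (W - 1))" by (rule cl_add) (use cl_mono[OF assms(1)] assms(2) in \<open>auto simp: close_def\<close>)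
    then show ?thesis by simp
  qed
  have "W ^ i - 1 = (W - 1) * (\<Sum>j<i. W ^ j)" by (rule power_diff_1_eq)
  moreover have "cl 0 (\<Sum>j<i. W ^ j)" by (rule cl_sum) (rule cl_pow[OF W0])
  ultimately show ?thesis using cl_mult[OF assms(1), of 0] by simp
qed

lemma geom_approx: assumes "cl \<kappa> (W - 1)" "\<kappa> \<ge> 0"
  shows "cl \<kappa> ((\<Sum>j<t. W ^ j) - of_nat t)"
proof -
  have "(\<Sum>j<t. W ^ j) - of_nat t = (\<Sum>j<t. W ^ j - 1)" by (simp add: sum_subtractf)
  moreover have "cl \<kappa> (\<Sum>j<t. W ^ j - 1)" by (rule cl_sum) (rule pow_cl[OF assms])
  ultimately show ?thesis by simp
qed

lemma pow_p: assumes "W \<noteq> 1" "v (W - 1) = \<kappa>" "\<kappa> \<ge> 1"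
  shows "W ^ p \<noteq> 1 \<and> v (W ^ p - 1) = \<kappa> + 1"
proof -
  have c: "cl \<kappa> (W - 1)" using assms by (simp add: close_def)
  have k0: "\<kappa> \<ge> 0" using assms by simp
  define E where "E = (\<Sum>i<p. (\<Sum>j<i. W ^ j) - of_nat i)"
  have cE: "cl \<kappa> E" unfolding E_def by (rule cl_sum) (rule geom_approx[OF c k0])
  have "(\<Sum>i<p. W ^ i) = of_nat p + (\<Sum>i<p. W ^ i - 1)" by (simp add: sum_subtractf)
  also have "(\<Sum>i<p. W ^ i - 1) = (\<Sum>i<p. (W - 1) * (\<Sum>j<i. W ^ j))"
    by (rule sum.cong) (auto simp: power_diff_1_eq)
  also have "\<dots> = (W - 1) * (\<Sum>i<p. (\<Sum>j<i. W ^ j))" by (simp add: sum_distrib_left)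
  also have "(\<Sum>i<p. (\<Sum>j<i. W ^ j)) = E + of_nat (\<Sum>i<p. i)"
    by (simp add: E_def sum_subtractf)
  also have "of_nat (\<Sum>i<p. i) = (of_nat p * of_nat ((p - 1) div 2) :: 'a)"
    by (simp add: sum_less_p)
  finally have S: "(\<Sum>i<p. W ^ i) = of_nat p + ((W - 1) * E + (W - 1) * (of_nat p * of_nat ((p - 1) div 2)))"
    by (simp add: algebra_simps)
  have t1: "cl 2 ((W - 1) * E)" using cl_mult[OF c cE] assms(3) cl_mono by fastforce
  have t2: "cl 2 ((W - 1) * (of_nat p * of_nat ((p - 1) div 2)))"
  proof -
    have "cl 1 (of_nat p * of_nat ((p - 1) div 2) :: 'a)"
      using cl_mult[OF cl_self[of "of_nat p :: 'a"] cl_nat[of "(p - 1) div 2"]] vp by simp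
    from cl_mult[OF c this] show ?thesis using assms(3) cl_mono by fastforce
  qed
  have "cl (v (of_nat p :: 'a) + 1) ((W - 1) * E + (W - 1) * (of_nat p * of_nat ((p - 1) div 2)))"
    using cl_add[OF t1 t2] vp by simp
  from v_strict[OF _ this] have Sv: "(\<Sum>i<p. W ^ i) \<noteq> 0" "v (\<Sum>i<p. W ^ i) = 1"
    using S vp pp by (auto simp: prime_gt_0_nat)
  have "W ^ p - 1 = (W - 1) * (\<Sum>i<p. W ^ i)" by (rule power_diff_1_eq)
  moreover have "W - 1 \<noteq> 0" using assms by simp
  ultimately have e: "W ^ p - 1 = (W - 1) * (\<Sum>i<p. W ^ i)" "W - 1 \<noteq> 0" by auto
  then have ne: "W ^ p - 1 \<noteq> 0" unfolding e(1) using Sv(1) by simp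
  have "v (W ^ p - 1) = \<kappa> + 1" unfolding e(1) using e(2) Sv assms by (simp add: vmult)
  moreover have "W ^ p \<noteq> 1" using ne by simp
  ultimately show ?thesis by simp
qed

lemma pow_pj: assumes "w \<noteq> 1" "v (w - 1) = k" "k \<ge> 1"
  shows "w ^ (p ^ j) \<noteq> 1 \<and> v (w ^ (p ^ j) - 1) = k + int j"
proof (induction j)
  case 0 then show ?case using assms by simp
next
  case (Suc j)
  have "w ^ (p ^ Suc j) = (w ^ (p ^ j)) ^ p"
    by (simp only: power_Suc power_mult[symmetric] mult.commute)
  moreover have "k + int j \<ge> 1" using assms by simp
  ultimately show ?case using pow_p[of "w ^ (p ^ j)" "k + int j"] Suc by simp
qed

end



lemma mob_diff:
  fixes \<alpha> \<beta> \<gamma> \<delta> y1 y2 :: "'a::field"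
  assumes "\<gamma> * y1 + \<delta> \<noteq> 0" "\<gamma> * y2 + \<delta> \<noteq> 0"
  shows "(\<alpha> * y2 + \<beta>) / (\<gamma> * y2 + \<delta>) - (\<alpha> * y1 + \<beta>) / (\<gamma> * y1 + \<delta>)
       = (\<alpha> * \<delta> - \<beta> * \<gamma>) * (y2 - y1) / ((\<gamma> * y1 + \<delta>) * (\<gamma> * y2 + \<delta>))"
  using assms by (simp add: field_simps)

context padic begin

lemma digit:
  fixes g :: "nat \<Rightarrow> 'a" and e :: int
  assumes gQ: "\<And>N. g N \<in> Qp v"
  and st: "\<And>N j. g (N + p^j) - g N \<noteq> 0 \<and> v (g (N + p^j) - g N) = e + int j"
  and lin: "\<And>N j t. t < p \<Longrightarrow> cl (e + int j + 1) (g (N + p^j * t) - g N - of_nat t * (g (N + p^j) - g N))"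
  and zQ: "z \<in> Qp v" and z0: "cl e (z - g 0)"
  shows "\<exists>N. cl m (z - g N)"
proof -
  have "\<exists>N. cl (e + int j) (z - g N)" for j
  proof (induction j)
    case 0 then show ?case using z0 by auto
  next
    case (Suc j)
    then obtain N where N: "cl (e + int j) (z - g N)" by blast
    define D where "D = g (N + p^j) - g N"
    have D0: "D \<noteq> 0" and vD: "v D = e + int j" using st[of N j] by (auto simp: D_def)
    define r where "r = (z - g N) / D"
    have rQ: "r \<in> Qp v" unfolding r_def D_def by (intro Qp_divide Qp_diff gQ zQ)
    have r0: "cl 0 r" unfolding r_def using cl_div_iff[OF D0, of 0 "z - g N"] N vD by simp
    obtain t where t: "t < p" "cl 1 (r - of_nat t)" using residue[OF rQ r0] by blast
    have a: "cl (e + int j + 1) (D * (r - of_nat t))"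
      by (rule cl_mult'[OF cl_self t(2)]) (simp add: vD)
    have b: "cl (e + int j + 1) (g (N + p^j * t) - g N - of_nat t * D)"
      using lin[OF t(1), of j N] by (simp add: D_def)
    have eqz: "z - g (N + p^j * t) = D * (r - of_nat t) - (g (N + p^j * t) - g N - of_nat t * D)"
    proof -
      have Dr: "D * r = z - g N" using D0 by (simp add: r_def)
      have "D * (r - of_nat t) - (g (N + p^j * t) - g N - of_nat t * D) = D * r - g (N + p^j * t) + g N"
        by (simp add: algebra_simps)
      then show ?thesis unfolding Dr by simp
    qed
    have "cl (e + int j + 1) (z - g (N + p^j * t))" unfolding eqz by (rule cl_diff[OF a b])
    moreover have "e + int j + 1 = e + int (Suc j)" by simp
    ultimately show ?case by metis
  qed
  then obtain N where "cl (e + int (nat (m - e))) (z - g N)" by blast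
  then have "cl m (z - g N)" by (rule cl_mono) simp
  then show ?thesis by blast
qed

lemma mobius:
  fixes \<alpha> \<beta> \<gamma> \<delta> A B w :: 'a and k \<mu> :: int and y Q h :: "nat \<Rightarrow> 'a"
  assumes yd: "\<And>N. y N = A + B * w ^ N"
  and Qd: "\<And>N. Q N = \<gamma> * y N + \<delta>"
  and hd: "\<And>N. h N = (\<alpha> * y N + \<beta>) / Q N"
  and w1: "w \<noteq> 1" and vw: "v (w - 1) = k" and k1: "k \<ge> 1"
  and B0: "B \<noteq> 0" and vB: "v B = 0"
  and D0: "\<alpha> * \<delta> - \<beta> * \<gamma> \<noteq> 0"
  and Q0: "\<And>N. Q N \<noteq> 0" and vQ: "\<And>N. v (Q N) = \<mu>"
  and g0: "\<gamma> \<noteq> 0" and vg: "v \<gamma> + k > \<mu>"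
  and hQ: "\<And>N. h N \<in> Qp v"
  shows "\<And>N. cl (v (\<alpha> * \<delta> - \<beta> * \<gamma>) + k - 2 * \<mu>) (h N - h 0)"
    and "\<And>z m. z \<in> Qp v \<Longrightarrow> cl (v (\<alpha> * \<delta> - \<beta> * \<gamma>) + k - 2 * \<mu>) (z - h 0) \<Longrightarrow> \<exists>N. cl m (z - h N)"
proof -
  define \<Delta> where "\<Delta> = \<alpha> * \<delta> - \<beta> * \<gamma>"
  have hdiff: "h M - h N = \<Delta> * (B * w ^ N * (w ^ (M - N) - 1)) / (Q N * Q M)" if "N \<le> M" for M N
  proof -
    have "h M - h N = \<Delta> * (y M - y N) / (Q N * Q M)"
      unfolding hd Qd \<Delta>_def by (rule mob_diff) (use Q0 Qd in auto)
    moreover have "y M - y N = B * w ^ N * (w ^ (M - N) - 1)"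
      using that by (simp add: yd algebra_simps flip: power_add)
    ultimately show ?thesis by simp
  qed
  have wN: "w ^ N \<noteq> 0 \<and> v (w ^ N) = 0" for N
  proof -
    have "w \<noteq> 0 \<and> v w = 0" using unit_of_cl1[of w] vw k1 by (simp add: close_def)
    then show ?thesis by (simp add: vpow)
  qed
  have cw: "cl k (w - 1)" using vw by (simp add: close_def)
  have k0: "k \<ge> 0" using k1 by simp
  show "cl (v (\<alpha> * \<delta> - \<beta> * \<gamma>) + k - 2 * \<mu>) (h N - h 0)" for N
  proof -
    have "cl (v \<Delta> + (v B + v (w ^ 0) + k)) (\<Delta> * (B * w ^ 0 * (w ^ (N - 0) - 1)))"
      by (intro cl_mult[OF cl_self] cl_mult[OF cl_mult[OF cl_self cl_self]] pow_cl[OF cw k0])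
    then have "cl (v \<Delta> + k) (\<Delta> * (B * w ^ 0 * (w ^ (N - 0) - 1)))" using vB by simp
    from cl_div[OF this, of "Q 0 * Q N"] have "cl (v \<Delta> + k - 2 * \<mu>) (h N - h 0)"
      using hdiff[of 0 N] Q0 vQ by (simp add: vmult)
    then show ?thesis by (simp add: \<Delta>_def)
  qed
  fix z m assume zQ: "z \<in> Qp v" and z0: "cl (v (\<alpha> * \<delta> - \<beta> * \<gamma>) + k - 2 * \<mu>) (z - h 0)"
  define e where "e = v \<Delta> + k - 2 * \<mu>"
  have key: "\<exists>G. G \<noteq> 0 \<and> v G = e + int j \<and>
     (\<forall>t. cl (e + int j + 1) (h (N + p^j * t) - h N - of_nat t * G))" for N j
  proof -
    define W where "W = w ^ (p ^ j)"
    define \<kappa> where "\<kappa> = k + int j"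
    have W1: "W \<noteq> 1" and vW: "v (W - 1) = \<kappa>" using pow_pj[OF w1 vw k1, of j] by (auto simp: W_def \<kappa>_def)
    have cW: "cl \<kappa> (W - 1)" using vW by (simp add: close_def)
    have k0': "\<kappa> \<ge> 1" using k1 by (simp add: \<kappa>_def)
    define G0 where "G0 = \<Delta> * (B * w ^ N) / (Q N * Q N)"
    have G00: "G0 \<noteq> 0" and vG0: "v G0 = v \<Delta> - 2 * \<mu>"
      using D0 B0 wN[of N] Q0[of N] vQ[of N] vB by (auto simp: G0_def \<Delta>_def vmult vdiv)
    define G where "G = G0 * (W - 1)"
    have G0': "G \<noteq> 0" and vG: "v G = e + int j"
      using G00 vG0 W1 vW by (auto simp: G_def vmult e_def \<kappa>_def)
    have R: "cl (e + int j + 1) (h (N + p^j * t) - h N - of_nat t * G)" for t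
    proof -
      define \<eta> where "\<eta> = (\<Sum>i<t. W ^ i) - of_nat t"
      have c\<eta>: "cl \<kappa> \<eta>" unfolding \<eta>_def by (rule geom_approx[OF cW]) (use k0' in simp)
      have Wt: "W ^ t - 1 = (W - 1) * (of_nat t + \<eta>)"
        by (simp add: \<eta>_def power_diff_1_eq)
      have Wt': "w ^ (p^j * t) = W ^ t" unfolding W_def by (rule power_mult)
      have pw: "w ^ (N + p^j * t - N) = W ^ t" using Wt' by simp
      define \<epsilon> where "\<epsilon> = \<gamma> * (B * w ^ N) * (W ^ t - 1) / Q (N + p^j * t)"
      have QQ: "Q (N + p^j * t) - Q N = \<gamma> * (B * w ^ N) * (W ^ t - 1)"
      proof -
        have "Q (N + p^j * t) - Q N = \<gamma> * (B * (w ^ N * w ^ (p^j * t) - w ^ N))"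
          by (simp add: Qd yd power_add algebra_simps)
        then show ?thesis unfolding Wt' by (simp add: algebra_simps)
      qed
      have rat: "Q N / Q (N + p^j * t) = 1 - \<epsilon>"
        using Q0[of "N + p^j * t"] QQ by (simp add: \<epsilon>_def field_simps)
      have c\<epsilon>: "cl 1 \<epsilon>"
      proof -
        have "cl (v \<gamma> + (v B + v (w ^ N) + \<kappa>)) (\<gamma> * (B * w ^ N) * (W ^ t - 1))"
          using cl_mult[OF cl_mult[OF cl_self[of \<gamma>] cl_mult[OF cl_self[of B] cl_self[of "w ^ N"]]] pow_cl[OF cW, of t]] k0'
          by (simp add: algebra_simps)
        from cl_div[OF this Q0[of "N + p^j * t"]] have "cl (v \<gamma> + \<kappa> - \<mu>) \<epsilon>"
          using vB wN[of N] vQ by (simp add: \<epsilon>_def)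
        then show ?thesis by (rule cl_mono) (use vg k1 in \<open>simp add: \<kappa>_def\<close>)
      qed
      have "h (N + p^j * t) - h N = \<Delta> * (B * w ^ N * (W ^ t - 1)) / (Q N * Q (N + p^j * t))"
        using hdiff[of N "N + p^j * t"] unfolding pw by simp
      also have "\<dots> = G0 * (W ^ t - 1) * (Q N / Q (N + p^j * t))"
        using Q0[of N] Q0[of "N + p^j * t"] unfolding G0_def by (simp add: field_simps)
      also have "\<dots> = of_nat t * G + G * (\<eta> - (of_nat t + \<eta>) * \<epsilon>)"
        unfolding rat Wt G_def by (simp add: algebra_simps)
      finally have eq: "h (N + p^j * t) - h N - of_nat t * G = G * (\<eta> - (of_nat t + \<eta>) * \<epsilon>)" by simp
      have "cl 1 (\<eta> - (of_nat t + \<eta>) * \<epsilon>)"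
      proof (rule cl_diff)
        show "cl 1 \<eta>" using c\<eta> k0' cl_mono by blast
        have "cl 0 (of_nat t + \<eta>)" by (rule cl_add[OF cl_nat]) (use c\<eta> k0' cl_mono in \<open>force\<close>)
        from cl_mult[OF this c\<epsilon>] show "cl 1 ((of_nat t + \<eta>) * \<epsilon>)" by simp
      qed
      from cl_mult[OF cl_self[of G] this] show ?thesis unfolding eq vG by simp
    qed
    show ?thesis using G0' vG R by blast
  qed
  show "\<exists>N. cl m (z - h N)"
  proof (rule digit[OF hQ _ _ zQ])
    show "cl e (z - h 0)" using z0 by (simp add: e_def \<Delta>_def)
    fix N j
    obtain G where G: "G \<noteq> 0" "v G = e + int j" "\<forall>t. cl (e + int j + 1) (h (N + p^j * t) - h N - of_nat t * G)"
      using key by blast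
    have "cl (v G + 1) (h (N + p^j) - h N - G)" using G(3)[rule_format, of 1] G(2) by simp
    from v_strict[OF G(1) this] have e1: "h (N + p ^ j) - h N \<noteq> 0 \<and> v (h (N + p ^ j) - h N) = e + int j"
      using G(2) by simp
    then show "h (N + p ^ j) - h N \<noteq> 0 \<and> v (h (N + p ^ j) - h N) = e + int j" .
    fix t :: nat assume "t < p"
    have a: "cl (e + int j + 1) (h (N + p^j * t) - h N - of_nat t * G)" using G(3) by blast
    have b: "cl (e + int j + 1) (of_nat t * (h (N + p^j) - h N - G))"
      using cl_mult[OF cl_nat[of t] G(3)[rule_format, of 1]] by simp
    have eqq: "h (N + p ^ j * t) - h N - of_nat t * (h (N + p ^ j) - h N)
        = (h (N + p^j * t) - h N - of_nat t * G) - of_nat t * (h (N + p^j) - h N - G)"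
      by (simp add: algebra_simps)
    show "cl (e + int j + 1) (h (N + p ^ j * t) - h N - of_nat t * (h (N + p ^ j) - h N))"
      unfolding eqq by (rule cl_diff[OF a b])
  qed
qed

end



locale kep = padic p v for p :: nat and v :: "'a::field_char_0 \<Rightarrow> int" +
  fixes a :: "nat \<Rightarrow> 'a" and c1 c2 lam1 lam2 :: 'a
  assumes af: "\<And>n. a n = c1 * lam1 ^ n + c2 * lam2 ^ n"
  and c10: "c1 \<noteq> 0" and c20: "c2 \<noteq> 0" and l10: "lam1 \<noteq> 0" and l20: "lam2 \<noteq> 0"
  and vl: "v lam1 = v lam2"
  and nru: "\<not> (\<exists>n>0. (lam2 / lam1) ^ n = 1)"
  and aQ: "\<And>n. a n \<in> Qp v"
begin

definition "x = c1 / c2"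
definition "u = lam2 / lam1"
definition "CC = x * (lam1 - lam2)"
definition "cc = (lam1 + lam2) / 2"
definition "DD = lam2 - cc"
definition "l = ord_mod_p v u"
definition "w = u ^ l"
definition "k = v (w - 1)"
definition "y n = x + u ^ n"
definition "rho n = a (Suc n) / a n"
definition "sig n = y n / (DD * y n + CC)"
definition "SS = {a (Suc n) / a n | n. a n \<noteq> 0}"

lemma x0: "x \<noteq> 0" by (simp add: x_def c10 c20)
lemma u0: "u \<noteq> 0" by (simp add: u_def l10 l20)
lemma vu: "v u = 0" by (simp add: u_def vdiv l10 l20 vl)
lemma upow_ne1: "n > 0 \<Longrightarrow> u ^ n \<noteq> 1" using nru unfolding u_def by blast
lemma u_ne1: "u \<noteq> 1" using upow_ne1[of 1] by simp
lemma lam_ne: "lam1 \<noteq> lam2" using u_ne1 l10 by (auto simp: u_def)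
lemma C0: "CC \<noteq> 0" using x0 lam_ne by (simp add: CC_def)
lemma vupow: "u ^ n \<noteq> 0 \<and> v (u ^ n) = 0" using u0 vu by (simp add: vpow)
lemma DD_eq: "DD = (lam2 - lam1) / 2" by (simp add: DD_def cc_def field_simps)
lemma vDD: "DD \<noteq> 0 \<and> v DD = v (lam1 - lam2)"
proof -
  have "lam2 - lam1 \<noteq> 0" using lam_ne by simp
  then show ?thesis unfolding DD_eq using v2 vneg[of "lam1 - lam2"] by (simp add: vdiv)
qed
lemma vC: "v CC = v x + v (lam1 - lam2)"
  using x0 lam_ne by (simp add: CC_def vmult)

lemma a_eq: "a n = c2 * lam1 ^ n * y n"
  using l10 c20 by (simp add: af y_def x_def u_def field_simps power_divide)
lemma a0_iff: "a n \<noteq> 0 \<longleftrightarrow> y n \<noteq> 0"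
  using l10 c20 by (simp add: a_eq)
lemma rho_eq: "y n \<noteq> 0 \<Longrightarrow> rho n = (lam2 * y n + CC) / (1 * y n + 0)"
proof -
  assume h: "y n \<noteq> 0"
  have "rho n = lam1 * y (Suc n) / y n" using l10 c20 h by (simp add: rho_def a_eq field_simps)
  moreover have "lam1 * y (Suc n) = lam2 * y n + CC"
    using l10 by (simp add: y_def CC_def u_def field_simps)
  ultimately show ?thesis by simp
qed
lemma rhoQ: "rho n \<in> Qp v" by (simp add: rho_def Qp_divide aQ)

lemma ccQ: "cc \<in> Qp v"
proof -
  have d: "a 1 ^ 2 - a 0 * a 2 = - c1 * c2 * (lam1 - lam2) ^ 2"
    by (simp add: af power2_eq_square algebra_simps)
  have n: "a 1 * a 2 - a 0 * a 3 = - c1 * c2 * (lam1 + lam2) * (lam1 - lam2) ^ 2"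
    by (simp add: af power2_eq_square power3_eq_cube algebra_simps)
  have "- c1 * c2 * (lam1 - lam2) ^ 2 \<noteq> 0" using c10 c20 lam_ne by simp
  then have "lam1 + lam2 = (a 1 * a 2 - a 0 * a 3) / (a 1 ^ 2 - a 0 * a 2)"
    unfolding d n by (simp add: field_simps)
  then have "lam1 + lam2 \<in> Qp v" by (simp add: Qp_divide Qp_diff Qp_mult Qp_power aQ)
  then show ?thesis unfolding cc_def by (simp add: Qp_divide)
qed

lemma prodQ: "lam1 * lam2 \<in> Qp v"
proof -
  have d: "a 1 ^ 2 - a 0 * a 2 = - c1 * c2 * (lam1 - lam2) ^ 2"
    by (simp add: af power2_eq_square algebra_simps)
  have n: "a 2 ^ 2 - a 1 * a 3 = - c1 * c2 * (lam1 * lam2) * (lam1 - lam2) ^ 2"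
    by (simp add: af power2_eq_square power3_eq_cube algebra_simps)
  have "- c1 * c2 * (lam1 - lam2) ^ 2 \<noteq> 0" using c10 c20 lam_ne by simp
  then have "lam1 * lam2 = (a 2 ^ 2 - a 1 * a 3) / (a 1 ^ 2 - a 0 * a 2)"
    unfolding d n by (simp add: field_simps)
  then show ?thesis by (simp add: Qp_divide Qp_diff Qp_mult Qp_power aQ)
qed

end



fun ab :: "'a::field \<Rightarrow> nat \<Rightarrow> 'a \<times> 'a" where
  "ab \<tau> 0 = (0, 1)"
| "ab \<tau> (Suc n) = (\<tau> * fst (ab \<tau> n) + snd (ab \<tau> n), - fst (ab \<tau> n))"

lemma ab_pow: assumes "u * u = \<tau> * u - 1" shows "u ^ n = fst (ab \<tau> n) * u + snd (ab \<tau> n)"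
proof (induction n)
  case 0 then show ?case by simp
next
  case (Suc n)
  have "u ^ Suc n = u * (fst (ab \<tau> n) * u + snd (ab \<tau> n))" using Suc by simp
  also have "\<dots> = fst (ab \<tau> n) * (u * u) + snd (ab \<tau> n) * u" by (simp add: algebra_simps)
  also have "\<dots> = fst (ab \<tau> (Suc n)) * u + snd (ab \<tau> (Suc n))" unfolding assms by (simp add: algebra_simps)
  finally show ?case .
qed

context kep begin

lemma ab_Q: assumes "\<tau> \<in> Qp v" "cl 0 \<tau>"
  shows "fst (ab \<tau> n) \<in> Qp v \<and> snd (ab \<tau> n) \<in> Qp v \<and> cl 0 (fst (ab \<tau> n)) \<and> cl 0 (snd (ab \<tau> n))"
proof (induction n)
  case 0 then show ?case by (simp add: close_def)
next
  case (Suc n)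
  then show ?case using assms
    by (auto intro!: Qp_add Qp_mult Qp_neg cl_add cl_mult'[of 0 _ 0] simp: cl_neg)
qed

lemma ord_exists: "\<exists>d>0. cl 1 (u ^ d - 1)"
proof -
  define \<tau> where "\<tau> = u + inverse u"
  have uu: "u * u = \<tau> * u - 1" using u0 by (simp add: \<tau>_def field_simps)
  have "\<tau> = ((lam1 + lam2) ^ 2 - 2 * (lam1 * lam2)) / (lam1 * lam2)"
    using l10 l20 by (simp add: \<tau>_def u_def field_simps power2_eq_square)
  moreover have "lam1 + lam2 \<in> Qp v"
  proof -
    have "(2::'a) \<in> Qp v" by simp
    moreover have "cc * 2 = lam1 + lam2" by (simp add: cc_def)
    ultimately show ?thesis using Qp_mult[OF ccQ] by metis
  qed
  ultimately have tQ: "\<tau> \<in> Qp v" using prodQ by (simp add: Qp_divide Qp_diff Qp_mult Qp_power)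
  have t0: "cl 0 \<tau>" unfolding \<tau>_def using u0 vu by (intro cl_add) (auto simp: close_def vinv)
  have "\<forall>n. \<exists>q. fst q < p \<and> snd q < p \<and> cl 1 (fst (ab \<tau> n) - of_nat (fst q)) \<and> cl 1 (snd (ab \<tau> n) - of_nat (snd q))"
  proof
    fix n
    have h: "fst (ab \<tau> n) \<in> Qp v \<and> snd (ab \<tau> n) \<in> Qp v \<and> cl 0 (fst (ab \<tau> n)) \<and> cl 0 (snd (ab \<tau> n))"
      by (rule ab_Q[OF tQ t0])
    obtain t1 where "t1 < p" "cl 1 (fst (ab \<tau> n) - of_nat t1)" using residue h by blast
    moreover obtain t2 where "t2 < p" "cl 1 (snd (ab \<tau> n) - of_nat t2)" using residue h by blast
    ultimately show "\<exists>q. fst q < p \<and> snd q < p \<and> cl 1 (fst (ab \<tau> n) - of_nat (fst q)) \<and> cl 1 (snd (ab \<tau> n) - of_nat (snd q))"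
      by (intro exI[of _ "(t1, t2)"]) simp
  qed
  from choice[OF this] obtain F where F: "\<And>n. fst (F n) < p \<and> snd (F n) < p \<and> cl 1 (fst (ab \<tau> n) - of_nat (fst (F n))) \<and> cl 1 (snd (ab \<tau> n) - of_nat (snd (F n)))"
    by blast
  have "\<not> inj_on F {..p*p}"
  proof
    assume inj: "inj_on F {..p*p}"
    have "F n \<in> {..<p} \<times> {..<p}" for n using F[of n] by (simp add: mem_Times_iff)
    then have "F ` {..p*p} \<subseteq> {..<p} \<times> {..<p}" by blast
    then have "card (F ` {..p*p}) \<le> card ({..<p} \<times> {..<p})" by (intro card_mono) auto
    moreover have "card (F ` {..p*p}) = p * p + 1" using card_image[OF inj] by simp
    moreover have "card ({..<p} \<times> {..<p}) = p * p" by (simp add: card_cartesian_product)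
    ultimately show False by simp
  qed
  then obtain n1 n2 where n12: "n1 \<noteq> n2" "F n1 = F n2" unfolding inj_on_def by blast
  have main: "cl 1 (u ^ (n2 - n1) - 1)" if "n1 < n2" "F n1 = F n2" for n1 n2
  proof -
    have c1: "cl 1 (fst (ab \<tau> n2) - fst (ab \<tau> n1))"
      using cl_diff[OF conjunct1[OF conjunct2[OF conjunct2[OF F[of n2]]]] conjunct1[OF conjunct2[OF conjunct2[OF F[of n1]]]]] that(2) by simp
    have c2: "cl 1 (snd (ab \<tau> n2) - snd (ab \<tau> n1))"
      using cl_diff[OF conjunct2[OF conjunct2[OF conjunct2[OF F[of n2]]]] conjunct2[OF conjunct2[OF conjunct2[OF F[of n1]]]]] that(2) by simp
    have "u ^ n2 - u ^ n1 = (fst (ab \<tau> n2) - fst (ab \<tau> n1)) * u + (snd (ab \<tau> n2) - snd (ab \<tau> n1))"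
      using ab_pow[OF uu, of n1] ab_pow[OF uu, of n2] by (simp add: algebra_simps)
    moreover have "cl 1 ((fst (ab \<tau> n2) - fst (ab \<tau> n1)) * u + (snd (ab \<tau> n2) - snd (ab \<tau> n1)))"
      using cl_add[OF cl_mult'[OF c1 cl_self[of u]] c2] vu by simp
    moreover have "u ^ n2 - u ^ n1 = u ^ n1 * (u ^ (n2 - n1) - 1)"
      using that(1) by (simp add: algebra_simps flip: power_add)
    ultimately have "cl 1 (u ^ n1 * (u ^ (n2 - n1) - 1))" by simp
    then show ?thesis using cl_mult_iff[of "u ^ n1" 1] vupow[of n1] by simp
  qed
  show ?thesis
  proof (cases "n1 < n2")
    case True then show ?thesis using main n12 by (intro exI[of _ "n2 - n1"]) auto
  next
    case False then have "n2 < n1" using n12 by simp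
    then show ?thesis using main[of n2 n1] n12 by (intro exI[of _ "n1 - n2"]) auto
  qed
qed

lemma l_props: "l \<ge> 1" "cl 1 (u ^ l - 1)" "\<And>i. 0 < i \<Longrightarrow> i < l \<Longrightarrow> \<not> cl 1 (u ^ i - 1)"
proof -
  obtain d where d: "d > 0" "cl 1 (u ^ d - 1)" using ord_exists by blast
  have ex: "\<exists>l. 1 \<le> l \<and> cong_pm v 1 (u ^ l) 1"
    using d by (intro exI[of _ d]) (simp add: cong_pm_def)
  have "1 \<le> l \<and> cong_pm v 1 (u ^ l) 1" unfolding l_def ord_mod_p_def by (rule LeastI_ex[OF ex])
  then show "l \<ge> 1" "cl 1 (u ^ l - 1)" by (auto simp: cong_pm_def)
  fix i assume "0 < i" "i < l"
  from not_less_Least[OF this(2)[unfolded l_def ord_mod_p_def]] this(1)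
  show "\<not> cl 1 (u ^ i - 1)" by (auto simp: cong_pm_def)
qed

lemma w_props: "w \<noteq> 1" "v (w - 1) = k" "k \<ge> 1" "cl k (w - 1)"
proof -
  show w1: "w \<noteq> 1" unfolding w_def using upow_ne1 l_props(1) by simp
  show "v (w - 1) = k" by (simp add: k_def)
  moreover have "cl 1 (w - 1)" using l_props(2) by (simp add: w_def)
  ultimately show "k \<ge> 1" using w1 by (simp add: close_def)
  show "cl k (w - 1)" by (simp add: k_def close_def)
qed

lemma unit_diff: assumes "i < l" "j < l" "i \<noteq> j" shows "u ^ i - u ^ j \<noteq> 0 \<and> v (u ^ i - u ^ j) = 0"
proof -
  have g: "u ^ i - u ^ j \<noteq> 0 \<and> v (u ^ i - u ^ j) = 0" if "j < i" "i < l" for i j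
  proof -
    have e: "u ^ i - u ^ j = u ^ j * (u ^ (i - j) - 1)" using that by (simp add: algebra_simps flip: power_add)
    have ne: "u ^ (i - j) - 1 \<noteq> 0" using upow_ne1[of "i - j"] that by simp
    have "\<not> cl 1 (u ^ (i - j) - 1)" using l_props(3)[of "i - j"] that by simp
    moreover have "cl 0 (u ^ (i - j) - 1)" using cl_diff[OF cl_pow[of u "i - j"] cl_nat[of 1]] vu by (simp add: close_def)
    ultimately have "v (u ^ (i - j) - 1) = 0" using ne by (simp add: close_def)
    then show ?thesis unfolding e using ne vupow[of j] by (simp add: vmult)
  qed
  show ?thesis
  proof (cases "j < i")
    case True then show ?thesis using g assms by blast
  next
    case False then have "i < j" using assms by simp
    then have "u ^ j - u ^ i \<noteq> 0 \<and> v (u ^ j - u ^ i) = 0" using g assms by blast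
    moreover have "v (u ^ i - u ^ j) = v (u ^ j - u ^ i)" using vneg[of "u ^ j - u ^ i"] by simp
    ultimately show ?thesis by auto
  qed
qed

lemma y_shift: "y (n0 + l * N) = x + u ^ n0 * w ^ N"
proof -
  have "u ^ (n0 + l * N) = u ^ n0 * (u ^ l) ^ N" by (simp only: power_add power_mult)
  then show ?thesis by (simp add: y_def w_def)
qed

lemma y_shift_cl: "cl k (y (n0 + l * N) - y n0)"
proof -
  have "y (n0 + l * N) - y n0 = u ^ n0 * (w ^ N - 1)" unfolding y_shift by (simp add: y_def algebra_simps)
  moreover have "cl k (w ^ N - 1)" using pow_cl[OF w_props(4)] w_props(3) by simp
  ultimately show ?thesis using cl_mult[OF cl_self[of "u ^ n0"], of k] vupow by simp
qed

end



context kep begin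

lemma rho_SS: "y n \<noteq> 0 \<Longrightarrow> rho n \<in> SS"
  unfolding SS_def rho_def using a0_iff by blast

lemma regA:
  assumes y0: "y n0 \<noteq> 0" and yk: "v (y n0) < k"
  shows "\<And>N. y (n0 + l * N) \<noteq> 0 \<and> v (y (n0 + l * N)) = v (y n0)"
  and "\<And>N. cl (v CC + k - 2 * v (y n0)) (rho (n0 + l * N) - rho n0)"
  and "\<And>z. z \<in> Qp v \<Longrightarrow> cl (v CC + k - 2 * v (y n0)) (z - rho n0) \<Longrightarrow> z \<in> vclosure v SS"
proof -
  have yN: "y (n0 + l * N) \<noteq> 0 \<and> v (y (n0 + l * N)) = v (y n0)" for N
  proof -
    have "cl (v (y n0) + 1) (y (n0 + l * N) - y n0)" by (rule cl_mono[OF y_shift_cl]) (use yk in simp)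
    from v_strict'[OF y0 this] show ?thesis .
  qed
  then show "\<And>N. y (n0 + l * N) \<noteq> 0 \<and> v (y (n0 + l * N)) = v (y n0)" .
  define Y where "Y N = y (n0 + l * N)" for N
  define Q where "Q N = 1 * Y N + 0" for N
  define h where "h N = rho (n0 + l * N)" for N
  have hh: "h N = (lam2 * Y N + CC) / Q N" for N
    unfolding h_def Q_def Y_def using rho_eq yN by simp
  note M = mobius[where \<alpha> = lam2 and \<beta> = CC and \<gamma> = 1 and \<delta> = 0 and A = x and B = "u ^ n0" and w = w
      and k = k and \<mu> = "v (y n0)" and y = Y and Q = Q and h = h,
      OF _ _ hh w_props(1,2,3)]
  have vD: "v (lam2 * 0 - CC * 1) = v CC" by simp
  have prem: "Y N = x + u ^ n0 * w ^ N" "Q N = 1 * Y N + 0" "Q N \<noteq> 0" "v (Q N) = v (y n0)" "h N \<in> Qp v" for N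
    using yN[of N] by (auto simp: Y_def Q_def h_def y_shift rhoQ)
  have hyps: "u ^ n0 \<noteq> 0" "v (u ^ n0) = 0" "lam2 * 0 - CC * 1 \<noteq> 0" "(1::'a) \<noteq> 0" "v 1 + k > v (y n0)"
    using vupow[of n0] C0 yk by auto
  show "cl (v CC + k - 2 * v (y n0)) (rho (n0 + l * N) - rho n0)" for N
    using M(1)[OF prem(1,2) hyps(1,2,3) prem(3,4) hyps(4,5) prem(5), of N] by (simp add: h_def)
  fix z assume zQ: "z \<in> Qp v" and zc: "cl (v CC + k - 2 * v (y n0)) (z - rho n0)"
  show "z \<in> vclosure v SS" unfolding vclosure_def
  proof (intro CollectI allI)
    fix m
    obtain N where "cl m (z - h N)"
      using M(2)[OF prem(1,2) hyps(1,2,3) prem(3,4) hyps(4,5) prem(5) zQ, of m] zc by (auto simp: h_def)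
    moreover have "h N \<in> SS" unfolding h_def using rho_SS yN by blast
    ultimately show "\<exists>y\<in>SS. cl m (z - y)" by blast
  qed
qed

lemma sig_rho: "y n \<noteq> 0 \<Longrightarrow> DD * y n + CC \<noteq> 0 \<Longrightarrow> rho n - cc = inverse (sig n)"
proof -
  assume y0: "y n \<noteq> 0" and q: "DD * y n + CC \<noteq> 0"
  have "rho n - cc = (DD * y n + CC) / y n"
    using rho_eq[OF y0] y0 by (simp add: DD_def field_simps)
  then show ?thesis by (simp add: sig_def)
qed

end



context kep begin

lemma sigQ: "(DD * y n + CC \<noteq> 0) \<Longrightarrow> sig n \<in> Qp v"
proof (cases "y n = 0")
  case True then show ?thesis by (simp add: sig_def)
next
  case False
  assume q: "DD * y n + CC \<noteq> 0"
  have "sig n = inverse (rho n - cc)" using sig_rho[OF False q] by simp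
  then show ?thesis by (simp add: Qp_inverse Qp_diff rhoQ ccQ)
qed

lemma poleP:
  assumes yk: "cl k (y n0)"
  shows "v x = 0"
  and "\<And>z. z \<in> Qp v \<Longrightarrow> z \<noteq> cc \<Longrightarrow> cl (k - v CC) (inverse (z - cc)) \<Longrightarrow> z \<in> vclosure v SS"
  and "- x \<in> vclosure v (range (\<lambda>n. u ^ n))"
proof -
  have k1: "k \<ge> 1" using w_props(3) .
  have "cl (v (- (u ^ n0)) + 1) (y n0)" using cl_mono[OF yk] k1 vupow[of n0] by simp
  from v_strict[OF _ this] have vx: "x \<noteq> 0 \<and> v x = 0" using vupow[of n0] by (simp add: y_def)
  then show "v x = 0" by simp
  have vCC: "v CC = v (lam1 - lam2)" using vC vx by simp
  define Y where "Y N = y (n0 + l * N)" for N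
  define Q where "Q N = DD * Y N + CC" for N
  define h where "h N = sig (n0 + l * N)" for N
  have clY: "cl k (Y N)" for N
  proof -
    have e: "Y N = y n0 + (y (n0 + l * N) - y n0)" by (simp add: Y_def)
    show ?thesis unfolding e by (rule cl_add[OF yk y_shift_cl])
  qed
  have QN: "Q N \<noteq> 0 \<and> v (Q N) = v CC" for N
  proof -
    have "cl (v DD + k) (DD * Y N)" using cl_mult[OF cl_self clY] .
    then have "cl (v CC + 1) (DD * Y N)" using vDD vCC k1 cl_mono by fastforce
    from v_strict[OF C0 this] show ?thesis by (simp add: Q_def add.commute)
  qed
  have hh: "h N = (1 * Y N + 0) / Q N" for N by (simp add: h_def sig_def Y_def Q_def)
  have prem: "Y N = x + u ^ n0 * w ^ N" "Q N = DD * Y N + CC" "Q N \<noteq> 0" "v (Q N) = v CC" "h N \<in> Qp v" for N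
    using QN[of N] sigQ[of "n0 + l * N"] by (auto simp: Y_def Q_def h_def y_shift)
  have hyps: "u ^ n0 \<noteq> 0" "v (u ^ n0) = 0" "1 * CC - 0 * DD \<noteq> 0" "DD \<noteq> 0" "v DD + k > v CC"
    using vupow[of n0] C0 vDD vCC k1 by auto
  note M = mobius[where \<alpha> = 1 and \<beta> = 0 and \<gamma> = DD and \<delta> = CC and A = x and B = "u ^ n0" and w = w
      and k = k and \<mu> = "v CC" and y = Y and Q = Q and h = h,
      OF prem(1,2) hh w_props(1,2,3) hyps(1,2,3) prem(3,4) hyps(4,5) prem(5)]
  have ee: "v (1 * CC - 0 * DD) + k - 2 * v CC = k - v CC" by simp
  have h0: "cl (k - v CC) (h 0)"
  proof -
    have "h 0 = Y 0 / Q 0" by (simp add: hh)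
    then show ?thesis using cl_div[OF clY QN[THEN conjunct1]] QN by simp
  qed
  have conv: "\<And>s. s \<in> Qp v \<Longrightarrow> cl (k - v CC) s \<Longrightarrow> \<forall>m. \<exists>N. cl m (s - h N)"
  proof (intro allI)
    fix s m assume sQ: "s \<in> Qp v" and sc: "cl (k - v CC) s"
    have "cl (k - v CC) (s - h 0)" by (rule cl_diff[OF sc h0])
    then show "\<exists>N. cl m (s - h N)" using M(2)[OF sQ] ee by simp
  qed
  show "z \<in> vclosure v SS" if zQ: "z \<in> Qp v" and zc: "z \<noteq> cc" and zs: "cl (k - v CC) (inverse (z - cc))" for z
    unfolding vclosure_def
  proof (intro CollectI allI)
    fix M
    define s where "s = inverse (z - cc)"
    have s0: "s \<noteq> 0" using zc by (simp add: s_def)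
    have sQ: "s \<in> Qp v" unfolding s_def by (intro Qp_inverse Qp_diff zQ ccQ)
    obtain N where N: "cl (max (v s + 1) (M + 2 * v s)) (s - h N)" using conv[OF sQ zs[folded s_def]] by blast
    define n where "n = n0 + l * N"
    have "cl (v s + 1) (h N - s)" using cl_mono[OF N] cl_neg[of _ "s - h N"] by simp
    from v_strict'[OF s0 this] have hN: "h N \<noteq> 0" "v (h N) = v s" by auto
    have yn: "y n \<noteq> 0" using hN(1) by (simp add: h_def sig_def n_def)
    have qn: "DD * y n + CC \<noteq> 0" using QN[of N] by (simp add: Q_def Y_def n_def)
    have "rho n - cc = inverse (h N)" using sig_rho[OF yn qn] by (simp add: h_def n_def)
    then have "z - rho n = inverse s - inverse (h N)" by (simp add: s_def algebra_simps)
    also have "\<dots> = (h N - s) / (s * h N)" using s0 hN(1) by (simp add: field_simps)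
    finally have ez: "z - rho n = (h N - s) / (s * h N)" .
    have "cl (M + 2 * v s) (h N - s)" using cl_mono[OF N] cl_neg[of _ "s - h N"] by simp
    from cl_div[OF this, of "s * h N"] have "cl M ((h N - s) / (s * h N))" using s0 hN by (simp add: vmult)
    then have "cl M (z - rho n)" by (simp add: ez)
    moreover have "rho n \<in> SS" by (rule rho_SS[OF yn])
    ultimately show "\<exists>y\<in>SS. cl M (z - y)" by blast
  qed
  show "- x \<in> vclosure v (range (\<lambda>n. u ^ n))" unfolding vclosure_def
  proof (intro CollectI allI)
    fix M
    obtain N where N: "cl (M - v CC) (0 - h N)" using conv[OF Qp_0 cl0] by blast
    have "Y N = h N * Q N" using QN[of N] by (simp add: hh)
    then have "cl M (Y N)" using cl_mult[OF cl_neg[THEN iffD1, OF N[simplified]] cl_self[of "Q N"]] QN by simp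
    then have "cl M (- x - u ^ (n0 + l * N))" using cl_neg[of M "Y N"] by (simp add: Y_def y_def algebra_simps)
    then show "\<exists>y\<in>range (\<lambda>n. u ^ n). cl M (- x - y)" by blast
  qed
qed

end



context padic begin

lemma pZp_iff: "z \<in> pZp v m \<longleftrightarrow> z \<in> Qp v \<and> cl m z"
  by (simp add: pZp_def)

lemma coset_iff: "z \<in> coset v c m \<longleftrightarrow> z - c \<in> Qp v \<and> cl m (z - c)"
proof
  assume "z \<in> coset v c m"
  then obtain d where "d \<in> pZp v m" "z = c + d" unfolding coset_def by blast
  then show "z - c \<in> Qp v \<and> cl m (z - c)" by (simp add: pZp_iff)
next
  assume "z - c \<in> Qp v \<and> cl m (z - c)"
  then have "z - c \<in> pZp v m" by (simp add: pZp_iff)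
  moreover have "z = c + (z - c)" by simp
  ultimately show "z \<in> coset v c m" unfolding coset_def by blast
qed

lemma coset_Qp: "c \<in> Qp v \<Longrightarrow> z \<in> coset v c m \<Longrightarrow> z \<in> Qp v"
  using Qp_add[of "z - c" c] by (simp add: coset_iff)

lemma coset_closed: "c \<in> Qp v \<Longrightarrow> z \<in> Qp v \<Longrightarrow> s \<in> coset v c m \<Longrightarrow> cl m0 (z - s) \<Longrightarrow> m \<le> m0 \<Longrightarrow> z \<in> coset v c m"
proof -
  assume cQ: "c \<in> Qp v" and zQ: "z \<in> Qp v" and s: "s \<in> coset v c m" and zs: "cl m0 (z - s)" and mm: "m \<le> m0"
  have e: "z - c = (z - s) + (s - c)" by simp
  have "cl m (s - c)" using s by (simp add: coset_iff)
  then have "cl m (z - c)" unfolding e by (rule cl_add[OF cl_mono[OF zs mm]])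
  then show ?thesis using Qp_diff[OF zQ cQ] by (simp add: coset_iff)
qed

end

context kep begin

lemma kepler_eq: "kepler_set v a = Qp v \<inter> vclosure v SS"
  by (simp add: kepler_set_def SS_def)

lemma closure_sub:
  assumes "SS \<subseteq> T" and "\<And>z s. z \<in> Qp v \<Longrightarrow> s \<in> T \<Longrightarrow> cl m0 (z - s) \<Longrightarrow> z \<in> T"
  shows "kepler_set v a \<subseteq> T"
proof
  fix z assume "z \<in> kepler_set v a"
  then have zQ: "z \<in> Qp v" and "\<forall>m. \<exists>s\<in>SS. cl m (z - s)" by (auto simp: kepler_eq vclosure_def)
  then obtain s where "s \<in> SS" "cl m0 (z - s)" by blast
  then show "z \<in> T" using assms zQ by blast
qed

lemma SS_elim: "s \<in> SS \<Longrightarrow> \<exists>n. y n \<noteq> 0 \<and> s = rho n"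
  unfolding SS_def rho_def using a0_iff by blast

lemma rho_split: "y n \<noteq> 0 \<Longrightarrow> rho n = lam2 + CC / y n"
  using rho_eq[of n] by (simp add: field_simps)

lemma rho_diff: assumes "i < l" "j < l" "i \<noteq> j" "y i \<noteq> 0" "y j \<noteq> 0"
  shows "rho i - rho j \<noteq> 0 \<and> v (rho i - rho j) = v CC - v (y i) - v (y j)"
proof -
  have "rho i - rho j = (lam2 * 0 - CC * 1) * (y i - y j) / ((1 * y j + 0) * (1 * y i + 0))"
    unfolding rho_eq[OF assms(4)] rho_eq[OF assms(5)] by (rule mob_diff) (use assms in auto)
  moreover have "y i - y j = u ^ i - u ^ j" by (simp add: y_def)
  ultimately have e: "rho i - rho j = - CC * (u ^ i - u ^ j) / (y j * y i)" by simp
  show ?thesis unfolding e using unit_diff[OF assms(1-3)] C0 assms(4,5) by (simp add: vmult vdiv)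
qed

lemma n_decomp: "n = n mod l + l * (n div l)" by simp

lemma regB_in:
  assumes "y n \<noteq> 0" "y (n mod l) \<noteq> 0" "v (y (n mod l)) < k"
  shows "rho n \<in> coset v (rho (n mod l)) (v CC + k - 2 * v (y (n mod l)))"
proof -
  have "cl (v CC + k - 2 * v (y (n mod l))) (rho n - rho (n mod l))"
    using regA(2)[OF assms(2,3), of "n div l"] by simp
  then show ?thesis by (simp add: coset_iff Qp_diff rhoQ)
qed

end



context kep begin

lemma part1:
  assumes nL: "- x \<notin> vclosure v (range (\<lambda>n. u ^ n))"
  defines "e \<equiv> \<lambda>i. v CC + k - 2 * v (y i)"
  shows "kepler_set v a = (\<Union>i<l. coset v (rho i) (e i))
    \<and> (\<forall>i<l. \<forall>j<l. i \<noteq> j \<longrightarrow> coset v (rho i) (e i) \<inter> coset v (rho j) (e j) = {})"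
proof -
  have ny: "y i \<noteq> 0 \<and> v (y i) < k" for i
  proof -
    have "\<not> cl k (y i)" using poleP(3) nL by blast
    then show ?thesis by (auto simp: close_def)
  qed
  let ?T = "\<Union>i<l. coset v (rho i) (e i)"
  have sub: "kepler_set v a \<subseteq> ?T"
  proof (rule closure_sub[where ?m0.0 = "Max (e ` {..<l})"])
    show "SS \<subseteq> ?T"
    proof
      fix s assume "s \<in> SS"
      then obtain n where n: "y n \<noteq> 0" "s = rho n" using SS_elim by blast
      have "n mod l < l" using l_props(1) by simp
      moreover have "s \<in> coset v (rho (n mod l)) (e (n mod l))"
        using regB_in[OF n(1)] ny n(2) by (simp add: e_def)
      ultimately show "s \<in> ?T" by blast
    qed
    fix z s assume zQ: "z \<in> Qp v" and sT: "s \<in> ?T" and zs: "cl (Max (e ` {..<l})) (z - s)"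
    then obtain i where i: "i < l" "s \<in> coset v (rho i) (e i)" by blast
    have "e i \<le> Max (e ` {..<l})" using i by (intro Max_ge) auto
    then have "z \<in> coset v (rho i) (e i)" by (rule coset_closed[OF rhoQ zQ i(2) zs])
    then show "z \<in> ?T" using i by blast
  qed
  have sup: "?T \<subseteq> kepler_set v a"
  proof
    fix z assume "z \<in> ?T"
    then obtain i where i: "i < l" "z \<in> coset v (rho i) (e i)" by blast
    have zQ: "z \<in> Qp v" by (rule coset_Qp[OF rhoQ i(2)])
    have "cl (e i) (z - rho i)" using i(2) by (simp add: coset_iff)
    then have "z \<in> vclosure v SS" using regA(3)[OF ny[THEN conjunct1] ny[THEN conjunct2] zQ] by (simp add: e_def)
    then show "z \<in> kepler_set v a" using zQ by (simp add: kepler_eq)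
  qed
  have disj: "coset v (rho i) (e i) \<inter> coset v (rho j) (e j) = {}" if ij: "i < l" "j < l" "i \<noteq> j" for i j
  proof (rule ccontr)
    assume "coset v (rho i) (e i) \<inter> coset v (rho j) (e j) \<noteq> {}"
    then obtain z where zi: "cl (e i) (z - rho i)" and zj: "cl (e j) (z - rho j)" by (auto simp: coset_iff)
    have rd: "rho i - rho j \<noteq> 0 \<and> v (rho i - rho j) = v CC - v (y i) - v (y j)"
      by (rule rho_diff[OF ij]) (use ny in auto)
    have mb: "v (y i) - v (y j) < k \<and> v (y j) - v (y i) < k"
    proof (cases "v x < 0")
      case True
      have m: "v (y n) = v x" for n
      proof -
        have "cl (v x + 1) (u ^ n)" using vupow[of n] True by (simp add: close_def)
        from v_strict[OF x0 this] show ?thesis by (simp add: y_def)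
      qed
      show ?thesis using m w_props(3) by simp
    next
      case False
      have c0: "cl 0 (y n)" for n unfolding y_def by (rule cl_add) (use False x0 vupow[of n] in \<open>auto simp: close_def\<close>)
      have g: "v (y n) \<ge> 0" for n using c0[of n] ny[of n] by (simp add: close_def)
      show ?thesis using g[of i] g[of j] ny[of i] ny[of j] by linarith
    qed
    have "rho i - rho j = (z - rho j) - (z - rho i)" by simp
    then have "cl (min (e i) (e j)) (rho i - rho j)"
      using cl_diff[OF cl_mono[OF zj, of "min (e i) (e j)"] cl_mono[OF zi, of "min (e i) (e j)"]] by simp
    then have "min (e i) (e j) \<le> v CC - v (y i) - v (y j)" using rd by (simp add: close_def)
    then show False using mb unfolding e_def min_def by (auto split: if_splits)
  qed
  show ?thesis using sub sup disj by blast
qed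

end



context kep begin

lemma v_lamdiff: "v (lam1 - lam2) = v lam1 + v (u - 1)"
proof -
  have e: "lam1 - lam2 = lam1 * (1 - u)" using l10 by (simp add: u_def field_simps)
  have n: "1 - u \<noteq> 0" using u_ne1 by simp
  have "v (lam1 * (1 - u)) = v lam1 + v (1 - u)" by (rule vmult[OF l10 n])
  moreover have "v (1 - u) = v (u - 1)" using vneg[of "u - 1"] by simp
  ultimately show ?thesis unfolding e by simp
qed

lemma part2:
  assumes inL: "- x \<in> vclosure v (range (\<lambda>n. u ^ n))" and l1: "l = 1"
  shows "kepler_set v a = Qp v - coset v cc (1 + v lam2)"
proof -
  have wu: "w = u" using l1 by (simp add: w_def)
  have k1: "k \<ge> 1" and cu: "cl k (u - 1)" and vu1: "v (u - 1) = k" using w_props wu by auto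
  obtain n1 where "cl k (- x - u ^ n1)" using inL unfolding vclosure_def by blast
  then have yn1: "cl k (y n1)" using cl_neg[of k "- x - u ^ n1"] by (simp add: y_def algebra_simps)
  have upk: "cl k (u ^ n - 1)" for n using pow_cl[OF cu] k1 by simp
  have x1: "cl k (x + 1)"
  proof -
    have e: "x + 1 = y n1 - (u ^ n1 - 1)" by (simp add: y_def)
    show ?thesis unfolding e by (rule cl_diff[OF yn1 upk])
  qed
  have yk: "cl k (y n)" for n
  proof -
    have e: "y n = (x + 1) + (u ^ n - 1)" by (simp add: y_def)
    show ?thesis unfolding e by (rule cl_add[OF x1 upk])
  qed
  have vx: "v x = 0" using poleP(1)[OF yk[of 0]] .
  have vCC: "v CC = v lam1 + k" using vC vx v_lamdiff vu1 by simp
  define E where "E = 1 + v lam2"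
  have sub: "kepler_set v a \<subseteq> Qp v - coset v cc E"
  proof (rule closure_sub[where ?m0.0 = E])
    show "SS \<subseteq> Qp v - coset v cc E"
    proof
      fix s assume "s \<in> SS"
      then obtain n where n: "y n \<noteq> 0" "s = rho n" using SS_elim by blast
      have e: "rho n - cc = CC / y n + DD" using rho_split[OF n(1)] by (simp add: DD_def)
      have q0: "CC / y n \<noteq> 0" using C0 n(1) by simp
      have vq: "v (CC / y n) \<le> v lam1" using vdiv[OF C0 n(1)] yk[of n] n(1) vCC by (simp add: close_def)
      have "cl (v (CC / y n) + 1) DD" using vDD vq vCC vC vx k1 by (simp add: close_def)
      from v_strict[OF q0 this] have "rho n - cc \<noteq> 0 \<and> v (rho n - cc) = v (CC / y n)" by (simp add: e)
      then have "\<not> cl E (rho n - cc)" using vq vl by (simp add: close_def E_def)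
      then show "s \<in> Qp v - coset v cc E" using n rhoQ by (simp add: coset_iff)
    qed
    fix z s assume zQ: "z \<in> Qp v" and sT: "s \<in> Qp v - coset v cc E" and zs: "cl E (z - s)"
    show "z \<in> Qp v - coset v cc E"
    proof (rule ccontr)
      assume "z \<notin> Qp v - coset v cc E"
      then have "z \<in> coset v cc E" using zQ by simp
      have "s - z = - (z - s)" by simp
      then have "cl E (s - z)" using zs cl_neg by metis
      moreover have "s \<in> Qp v" using sT by simp
      ultimately have "s \<in> coset v cc E" using coset_closed[OF ccQ _ \<open>z \<in> coset v cc E\<close> _ order_refl] by blast
      then show False using sT by simp
    qed
  qed
  have sup: "Qp v - coset v cc E \<subseteq> kepler_set v a"
  proof
    fix z assume z: "z \<in> Qp v - coset v cc E"
    then have zQ: "z \<in> Qp v" by simp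
    have "\<not> cl E (z - cc)" using z Qp_diff[OF zQ ccQ] by (simp add: coset_iff)
    then have zc: "z - cc \<noteq> 0" "v (z - cc) \<le> v lam1" using vl by (auto simp: close_def E_def)
    have "cl (k - v CC) (inverse (z - cc))" using zc vCC by (simp add: close_def vinv)
    then have "z \<in> vclosure v SS" using poleP(2)[OF yk[of 0] zQ] zc by simp
    then show "z \<in> kepler_set v a" using zQ by (simp add: kepler_eq)
  qed
  show ?thesis using sub sup E_def by blast
qed

end



context kep begin

lemma part3:
  assumes inL: "- x \<in> vclosure v (range (\<lambda>n. u ^ n))" and l2: "2 \<le> l" and sl: "s < l"
    and ys: "cl k (y s)"
  defines "e \<equiv> v (lam2 - lam1) + k" and "f \<equiv> v lam2 + 1 - k"
  shows "kepler_set v a = (\<Union>i\<in>{..<l} - {s}. coset v (rho i) e) \<union> (Qp v - pZp v f)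
    \<and> (\<forall>i\<in>{..<l} - {s}. \<forall>j\<in>{..<l} - {s}. i \<noteq> j \<longrightarrow> coset v (rho i) e \<inter> coset v (rho j) e = {})
    \<and> (\<forall>i\<in>{..<l} - {s}. coset v (rho i) e \<inter> (Qp v - pZp v f) = {})"
proof -
  have k1: "k \<ge> 1" using w_props(3) .
  have vx: "v x = 0" using poleP(1)[OF ys] .
  have vu1: "v (u - 1) = 0"
  proof -
    have "\<not> cl 1 (u ^ 1 - 1)" using l_props(3)[of 1] l2 by simp
    moreover have "cl 0 (u - 1)" by (rule cl_diff) (use vu in \<open>auto simp: close_def\<close>)
    moreover have "u - 1 \<noteq> 0" using u_ne1 by simp
    ultimately show ?thesis by (simp add: close_def)
  qed
  have vCC: "v CC = v lam1" using vC vx v_lamdiff vu1 by simp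
  have ee: "e = v lam1 + k" unfolding e_def using v_lamdiff vu1 vneg[of "lam1 - lam2"] by simp
  have yi: "y i \<noteq> 0 \<and> v (y i) = 0" if "i < l" "i \<noteq> s" for i
  proof -
    have ud: "u ^ i - u ^ s \<noteq> 0 \<and> v (u ^ i - u ^ s) = 0" by (rule unit_diff[OF that(1) sl that(2)])
    have "cl (v (u ^ i - u ^ s) + 1) (y s)" using ud cl_mono[OF ys] k1 by simp
    from v_strict[OF ud[THEN conjunct1] this] show ?thesis using ud by (simp add: y_def add.commute)
  qed
  have Bi: "rho n \<in> coset v (rho (n mod l)) e" if "y n \<noteq> 0" "n mod l \<noteq> s" for n
  proof -
    have "n mod l < l" using l_props(1) by simp
    then have "y (n mod l) \<noteq> 0 \<and> v (y (n mod l)) = 0" using yi that(2) by blast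
    then show ?thesis using regB_in[OF that(1)] k1 vCC ee by simp
  qed
  let ?B = "\<lambda>i. coset v (rho i) e"
  let ?C = "Qp v - pZp v f"
  let ?T = "(\<Union>i\<in>{..<l} - {s}. ?B i) \<union> ?C"
  have ccl: "cl (v lam1) cc"
  proof -
    have "cl (v lam1) (lam1 + lam2)" by (rule cl_add[OF cl_self]) (simp add: vl close_def)
    from cl_div[OF this, of 2] show ?thesis using v2 by (simp add: cc_def)
  qed
  have sub: "kepler_set v a \<subseteq> ?T"
  proof (rule closure_sub[where ?m0.0 = "max e f"])
    show "SS \<subseteq> ?T"
    proof
      fix t assume "t \<in> SS"
      then obtain n where n: "y n \<noteq> 0" "t = rho n" using SS_elim by blast
      show "t \<in> ?T"
      proof (cases "n mod l = s")
        case False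
        have "n mod l < l" using l_props(1) by simp
        then show ?thesis using Bi[OF n(1) False] n(2) False by blast
      next
        case True
        have "y n = y s + (y (s + l * (n div l)) - y s)" using n_decomp[of n] True by simp
        then have ykn: "cl k (y n)" using cl_add[OF ys y_shift_cl] by metis
        have q0: "CC / y n \<noteq> 0" using C0 n(1) by simp
        have vq: "v (CC / y n) \<le> v lam1 - k" using vdiv[OF C0 n(1)] ykn n(1) vCC by (simp add: close_def)
        have "cl (v (CC / y n) + 1) lam2" using vq vl k1 by (simp add: close_def)
        from v_strict[OF q0 this] have "rho n \<noteq> 0 \<and> v (rho n) = v (CC / y n)"
          using rho_split[OF n(1)] by (simp add: add.commute)
        then have "\<not> cl f (rho n)" using vq vl by (simp add: close_def f_def)
        then show ?thesis using n rhoQ by (simp add: pZp_iff)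
      qed
    qed
    fix z t assume zQ: "z \<in> Qp v" and tT: "t \<in> ?T" and zt: "cl (max e f) (z - t)"
    show "z \<in> ?T"
    proof (cases "t \<in> ?C")
      case True
      have "z \<notin> pZp v f"
      proof
        assume "z \<in> pZp v f"
        then have "cl f z" by (simp add: pZp_iff)
        moreover have "cl f (z - t)" using cl_mono[OF zt] by simp
        ultimately have "cl f (z - (z - t))" by (rule cl_diff)
        then show False using True by (simp add: pZp_iff)
      qed
      then show ?thesis using zQ by blast
    next
      case False
      then obtain i where i: "i \<in> {..<l} - {s}" "t \<in> ?B i" using tT by blast
      have "z \<in> ?B i" by (rule coset_closed[OF rhoQ zQ i(2) zt]) simp
      then show ?thesis using i by blast
    qed
  qed
  have sup: "?T \<subseteq> kepler_set v a"
  proof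
    fix z assume zT: "z \<in> ?T"
    show "z \<in> kepler_set v a"
    proof (cases "z \<in> ?C")
      case True
      then have zQ: "z \<in> Qp v" and "\<not> cl f z" by (auto simp: pZp_iff)
      then have z0: "z \<noteq> 0" and vz: "v z \<le> v lam1 - k" using vl by (auto simp: close_def f_def)
      have "cl (v z + 1) (- cc)" using cl_mono[OF ccl] vz k1 cl_neg by simp
      from v_strict[OF z0 this] have zc: "z - cc \<noteq> 0" "v (z - cc) = v z" by auto
      have "cl (k - v CC) (inverse (z - cc))" using zc vz vCC by (simp add: close_def vinv)
      then have "z \<in> vclosure v SS" using poleP(2)[OF ys zQ] zc by simp
      then show ?thesis using zQ by (simp add: kepler_eq)
    next
      case False
      then obtain i where i: "i < l" "i \<noteq> s" "z \<in> ?B i" using zT by blast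
      have zQ: "z \<in> Qp v" by (rule coset_Qp[OF rhoQ i(3)])
      have "cl e (z - rho i)" using i(3) by (simp add: coset_iff)
      then have "z \<in> vclosure v SS"
        using regA(3)[OF yi[OF i(1,2), THEN conjunct1] _ zQ] yi[OF i(1,2)] k1 vCC ee by simp
      then show ?thesis using zQ by (simp add: kepler_eq)
    qed
  qed
  have disj: "?B i \<inter> ?B j = {}" if "i \<in> {..<l} - {s}" "j \<in> {..<l} - {s}" "i \<noteq> j" for i j
  proof (rule ccontr)
    assume "?B i \<inter> ?B j \<noteq> {}"
    then obtain z where zi: "cl e (z - rho i)" and zj: "cl e (z - rho j)" by (auto simp: coset_iff)
    have yi': "y i \<noteq> 0 \<and> v (y i) = 0" "y j \<noteq> 0 \<and> v (y j) = 0" using yi that by auto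
    have rd: "rho i - rho j \<noteq> 0 \<and> v (rho i - rho j) = v CC - v (y i) - v (y j)"
      by (rule rho_diff) (use that yi' in auto)
    have "rho i - rho j = (z - rho j) - (z - rho i)" by simp
    then have "cl e (rho i - rho j)" using cl_diff[OF zj zi] by simp
    then show False using rd yi' ee vCC k1 by (simp add: close_def)
  qed
  have disjC: "?B i \<inter> ?C = {}" if "i \<in> {..<l} - {s}" for i
  proof (rule ccontr)
    assume "?B i \<inter> ?C \<noteq> {}"
    then obtain z where zB: "z \<in> ?B i" and zC: "z \<in> ?C" by blast
    have yi': "y i \<noteq> 0 \<and> v (y i) = 0" using yi that by auto
    have "cl (v lam1) (rho i)" unfolding rho_split[OF yi'[THEN conjunct1]]
      by (rule cl_add) (use vl C0 yi' vCC in \<open>auto simp: close_def vdiv\<close>)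
    moreover have "cl (v lam1) (z - rho i)" using zB cl_mono[of e] ee k1 by (auto simp: coset_iff)
    ultimately have "cl (v lam1) (rho i + (z - rho i))" by (rule cl_add)
    then have "cl f z" using cl_mono vl k1 by (fastforce simp: f_def)
    then show False using zC by (simp add: pZp_iff)
  qed
  show ?thesis using sub sup disj disjC by blast
qed

end


theorem theorem2:
  fixes p :: nat and v :: "'a::field_char_0 \<Rightarrow> int"
    and a :: "nat \<Rightarrow> 'a" and r t c1 c2 lam1 lam2 :: 'a
  assumes "prime p" and "p \<ge> 3"
    and "Qp_or_unramified_quadratic p v"
    and "\<forall>n. a n \<in> Qp v"
    and "r \<in> Qp v" and "t \<in> Qp v"
    and "\<forall>n\<ge>2. a n = r * a (n - 1) + t * a (n - 2)"
    and "\<forall>n. a n = c1 * lam1 ^ n + c2 * lam2 ^ n"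
    and "c1 \<noteq> 0" and "c2 \<noteq> 0" and "lam1 \<noteq> 0" and "lam2 \<noteq> 0"
    and "v lam1 = v lam2"
    and "\<not> (\<exists>n>0. (lam2 / lam1) ^ n = 1)"
  shows
    "let u = lam2 / lam1; l = ord_mod_p v u; k = v (u ^ l - 1);
         \<Lambda> = vclosure v (range (\<lambda>n. u ^ n)); K = kepler_set v a
     in
     (- c1 / c2 \<notin> \<Lambda> \<longrightarrow>
        (let B = (\<lambda>i. coset v (a (Suc i) / a i)
                    (v (c1 / c2) + v (lam2 - lam1) - 2 * v (c1 / c2 + u ^ i) + k))
         in K = (\<Union>i<l. B i) \<and> (\<forall>i<l. \<forall>j<l. i \<noteq> j \<longrightarrow> B i \<inter> B j = {}))) \<and>
     (- c1 / c2 \<in> \<Lambda> \<and> l = 1 \<longrightarrow>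
        K = Qp v - coset v ((lam1 + lam2) / 2) (1 + v lam2)) \<and>
     (\<forall>s<l. - c1 / c2 \<in> \<Lambda> \<and> 2 \<le> l \<and> cong_pm v k (u ^ s) (- c1 / c2) \<longrightarrow>
        (let B = (\<lambda>i. coset v (a (Suc i) / a i) (v (lam2 - lam1) + k));
             C = Qp v - pZp v (v lam2 + 1 - k)
         in K = (\<Union>i\<in>{..<l} - {s}. B i) \<union> C \<and>
            (\<forall>i\<in>{..<l} - {s}. \<forall>j\<in>{..<l} - {s}. i \<noteq> j \<longrightarrow> B i \<inter> B j = {}) \<and>
            (\<forall>i\<in>{..<l} - {s}. B i \<inter> C = {})))"
proof -
  have pv: "padic_valuation p v" using assms(3) by (simp add: Qp_or_unramified_quadratic_def)
  interpret K: kep p v a c1 c2 lam1 lam2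
    by unfold_locales (use assms pv in auto)
  have ud: "lam2 / lam1 = K.u" by (simp add: K.u_def)
  have xd: "c1 / c2 = K.x" by (simp add: K.x_def)
  have mx: "- c1 / c2 = - K.x" by (simp add: K.x_def)
  have ld: "ord_mod_p v K.u = K.l" by (simp add: K.l_def)
  have kd: "v (K.u ^ K.l - 1) = K.k" by (simp add: K.k_def K.w_def)
  have rd: "\<And>i. a (Suc i) / a i = K.rho i" by (simp add: K.rho_def)
  have yd: "\<And>i. K.x + K.u ^ i = K.y i" by (simp add: K.y_def)
  have ed: "\<And>i. v K.x + v (lam2 - lam1) - 2 * v (K.y i) + K.k = v K.CC + K.k - 2 * v (K.y i)"
    using K.vC K.vneg[of "lam1 - lam2"] by simp
  have cd: "\<And>s. cong_pm v K.k (K.u ^ s) (- K.x) = close v K.k (K.y s)"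
    by (simp add: cong_pm_def K.y_def add.commute)
  show ?thesis
    unfolding Let_def ud xd mx ld kd rd yd ed cd
    apply (intro conjI impI allI)
    subgoal using K.part1 by blast
    subgoal using K.part1 by blast
    subgoal using K.part2 by (simp add: K.cc_def)
    subgoal for s using K.part3[of s] by blast
    subgoal for s using K.part3[of s] by blast
    subgoal for s using K.part3[of s] by blast
    done
qed

end
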